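(* Let $G=(V,E)$ be a strongly biconnected directed graph, let $t\ge 1$, and let $w_0,w_1,\ldots,w_t$ be pairwise distinct vertices of $G$ such that $w_0 \overset{e}{\leftrightsquigarrow} w_t$ and $w_{i-1} \overset{e}{\leftrightsquigarrow} w_i$ for every $i\in\{1,2,\ldots,t\}$. Then $\{w_0,w_1,\ldots,w_t\}$ is contained in some $2$-edge-biconnected block of $G$.
   Context: All graphs are finite. A directed graph $H$ is strongly biconnected if $H$ is strongly connected and its underlying undirected graph is biconnected. A strongly biconnected component of a directed graph $H=(W,F)$ is a maximal vertex subset $C\subseteq W$ such that the induced subgraph $H[C]$ is strongly biconnected. For a strongly biconnected directed graph $G=(V,E)$ and an edge $b\in E$, $G\setminus\{b\}=(V,E\setminus\{b\})$. For distinct $x,y\in V$, write $x \overset{e}{\leftrightsquigarrow} y$ if for every edge $b\in E$ there is a strongly biconnected component of $G\setminus\{b\}$ containing both $x$ and $y$. A $2$-edge-biconnected block of $G$ is a maximal vertex subset $U\subseteq V$ with $|U|>1$ such that $x \overset{e}{\leftrightsquigarrow} y$ for all distinct $x,y\in U$. *)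

theory Defs
  imports Main
begin

definition strongly_connected :: "'a set \<Rightarrow> ('a \<times> 'a) set \<Rightarrow> bool" where
  "strongly_connected V E \<longleftrightarrow>
     V \<noteq> {} \<and> (\<forall>x\<in>V. \<forall>y\<in>V. (x, y) \<in> (E \<inter> (V \<times> V))\<^sup>*)"

definition ucconnected :: "'a set \<Rightarrow> ('a \<times> 'a) set \<Rightarrow> bool" where
  "ucconnected V E \<longleftrightarrow>
     V \<noteq> {} \<and> (\<forall>x\<in>V. \<forall>y\<in>V. (x, y) \<in> ((E \<union> E\<inverse>) \<inter> (V \<times> V))\<^sup>*)"

definition ubiconnected :: "'a set \<Rightarrow> ('a \<times> 'a) set \<Rightarrow> bool" where
  "ubiconnected V E \<longleftrightarrow>
     ucconnected V E \<and> 2 \<le> card V \<and> (\<forall>v\<in>V. ucconnected (V - {v}) E)"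

definition strongly_biconnected :: "'a set \<Rightarrow> ('a \<times> 'a) set \<Rightarrow> bool" where
  "strongly_biconnected V E \<longleftrightarrow> strongly_connected V E \<and> ubiconnected V E"

definition sb_component :: "'a set \<Rightarrow> ('a \<times> 'a) set \<Rightarrow> 'a set \<Rightarrow> bool" where
  "sb_component W F C \<longleftrightarrow>
     C \<subseteq> W \<and> strongly_biconnected C (F \<inter> (C \<times> C)) \<and>
     (\<forall>C'. C \<subseteq> C' \<and> C' \<subseteq> W \<and> strongly_biconnected C' (F \<inter> (C' \<times> C')) \<longrightarrow> C' = C)"

text \<open>x ~e~ y: for every edge b, some strongly biconnected component of G \ {b}
contains both x and y.\<close>
definition e_sb_related :: "'a set \<Rightarrow> ('a \<times> 'a) set \<Rightarrow> 'a \<Rightarrow> 'a \<Rightarrow> bool" where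
  "e_sb_related V E x y \<longleftrightarrow>
     (\<forall>b\<in>E. \<exists>C. sb_component V (E - {b}) C \<and> x \<in> C \<and> y \<in> C)"

definition two_edge_biconnected_block :: "'a set \<Rightarrow> ('a \<times> 'a) set \<Rightarrow> 'a set \<Rightarrow> bool" where
  "two_edge_biconnected_block V E U \<longleftrightarrow>
     U \<subseteq> V \<and> card U > 1 \<and>
     (\<forall>x\<in>U. \<forall>y\<in>U. x \<noteq> y \<longrightarrow> e_sb_related V E x y) \<and>
     (\<forall>U'. U \<subseteq> U' \<and> U' \<subseteq> V \<and> card U' > 1 \<and>
        (\<forall>x\<in>U'. \<forall>y\<in>U'. x \<noteq> y \<longrightarrow> e_sb_related V E x y) \<longrightarrow> U' = U)"

end

theory Submission
  imports Defs
begin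

lemma rtr: "(x, y) \<in> R\<^sup>* \<and> (y, x) \<in> R\<^sup>* \<Longrightarrow> (y, z) \<in> R\<^sup>* \<and> (z, y) \<in> R\<^sup>* \<Longrightarrow> (x, z) \<in> R\<^sup>* \<and> (z, x) \<in> R\<^sup>*"
  by (meson rtrancl_trans)
lemma rsy: "(x, y) \<in> R\<^sup>* \<and> (y, x) \<in> R\<^sup>* \<Longrightarrow> (y, x) \<in> R\<^sup>* \<and> (x, y) \<in> R\<^sup>*" by simp
lemma rrf: "(x, x) \<in> R\<^sup>* \<and> (x, x) \<in> R\<^sup>*" by simp

lemma chain_lem:
  assumes tr: "\<And>x y z. P x y \<Longrightarrow> P y z \<Longrightarrow> P x z" and rf: "\<And>x. P x x"
  shows "a \<le> b \<Longrightarrow> (\<forall>m. a \<le> m \<and> m < b \<longrightarrow> P (w m) (w (Suc m))) \<Longrightarrow> P (w a) (w b)"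
proof (induction b)
  case 0 then show ?case using rf by simp
next
  case (Suc b)
  show ?case
  proof (cases "a = Suc b")
    case True then show ?thesis using rf by simp
  next
    case False
    then have ab: "a \<le> b" using Suc by simp
    then have "P (w a) (w b)" using Suc.IH Suc.prems by simp
    moreover have "P (w b) (w (Suc b))" using Suc.prems ab by simp
    ultimately show ?thesis using tr by blast
  qed
qed

lemma cyc:
  fixes P :: "'a \<Rightarrow> 'a \<Rightarrow> bool"
  assumes tr: "\<And>x y z. P x y \<Longrightarrow> P y z \<Longrightarrow> P x z" and sy: "\<And>x y. P x y \<Longrightarrow> P y x"
    and rf: "\<And>x. P x x"
    and t: "1 \<le> t" and inj: "inj_on w {0..t}"
    and w1: "\<And>i. i \<le> t \<Longrightarrow> w i \<in> D i" and w2: "\<And>i. i < t \<Longrightarrow> w (Suc i) \<in> D i"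
    and w3: "w 0 \<in> D t"
    and comp: "\<And>i x y. i \<le> t \<Longrightarrow> x \<in> D i - Z \<Longrightarrow> y \<in> D i - Z \<Longrightarrow> P x y"
    and Z: "Z \<subseteq> {v}"
  shows "\<And>i k x y. i \<le> t \<Longrightarrow> k \<le> t \<Longrightarrow> x \<in> D i - Z \<Longrightarrow> y \<in> D k - Z \<Longrightarrow> P x y"
proof -
  have link: "P (w m) (w (Suc m))" if "m < t" "w m \<notin> Z" "w (Suc m) \<notin> Z" for m
    using comp[of m "w m" "w (Suc m)"] w1[of m] w2[of m] that by simp
  have linkt: "P (w t) (w 0)" if "w t \<notin> Z" "w 0 \<notin> Z"
    using comp[of t "w t" "w 0"] w1[of t] w3 that by simp
  have ch: "P (w a) (w b)" if "a \<le> b" "b \<le> t" "\<forall>m. a \<le> m \<and> m \<le> b \<longrightarrow> w m \<notin> Z" for a b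
    using chain_lem[of P a b w, OF tr rf] that link by simp
  have injD: "i = k" if "i \<le> t" "k \<le> t" "w i \<in> Z" "w k \<in> Z" for i k
  proof -
    have "w i = w k" using that Z by auto
    then show ?thesis using inj that by (auto dest: inj_onD)
  qed
  have ww: "P (w i) (w k)" if "i \<le> t" "k \<le> t" "w i \<notin> Z" "w k \<notin> Z" for i k
  proof (cases "\<exists>j\<le>t. w j \<in> Z")
    case False
    then have "P (w 0) (w i)" "P (w 0) (w k)" using ch[of 0 i] ch[of 0 k] that by auto
    then show ?thesis using tr sy by blast
  next
    case True
    then obtain j where j: "j \<le> t" "w j \<in> Z" by blast
    have eq: "\<And>m. m \<le> t \<Longrightarrow> w m \<in> Z \<longleftrightarrow> m = j" using injD j by blast
    have lo: "P (w 0) (w m)" if "m < j" for m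
      using ch[of 0 m] that eq j by auto
    have hi: "P (w m) (w t)" if "j < m" "m \<le> t" for m
      using ch[of m t] that eq j by auto
    have ij: "i \<noteq> j" "k \<noteq> j" using that eq by auto
    show ?thesis
    proof (cases "i < j")
      case True
      show ?thesis
      proof (cases "k < j")
        case True then show ?thesis using lo[of i] lo[of k] \<open>i<j\<close> tr sy by blast
      next
        case False
        then have "j < k" using ij by simp
        moreover have "P (w t) (w 0)" using linkt eq j \<open>i<j\<close> \<open>j<k\<close> that by auto
        ultimately show ?thesis using lo[of i] hi[of k] \<open>i<j\<close> that tr sy by blast
      qed
    next
      case False
      then have "j < i" using ij by simp
      show ?thesis
      proof (cases "k < j")
        case True
        moreover have "P (w t) (w 0)" using linkt eq j \<open>j<i\<close> \<open>k<j\<close> that by auto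
        ultimately show ?thesis using lo[of k] hi[of i] \<open>j<i\<close> that tr sy by blast
      next
        case False
        then have "j < k" using ij by simp
        then show ?thesis using hi[of i] hi[of k] \<open>j<i\<close> that tr sy by blast
      qed
    qed
  qed
  have pick: "\<exists>m\<le>t. w m \<notin> Z \<and> P x (w m)" if "i \<le> t" "x \<in> D i - Z" for i x
  proof (cases "w i \<in> Z")
    case False then show ?thesis using comp[of i x "w i"] that w1 by blast
  next
    case True
    show ?thesis
    proof (cases "i = t")
      case True
      have "w 0 \<notin> Z" using injD[of t 0] \<open>w i \<in> Z\<close> True t by auto
      then show ?thesis using comp[of t x "w 0"] that w3 True by auto
    next
      case False
      have "w (Suc i) \<notin> Z" using injD[of i "Suc i"] \<open>w i \<in> Z\<close> False that by auto
      then show ?thesis using comp[of i x "w (Suc i)"] that w2[of i] False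
        by (metis Diff_iff Suc_leI le_less)
    qed
  qed
  fix i k x y assume a: "i \<le> t" "k \<le> t" "x \<in> D i - Z" "y \<in> D k - Z"
  obtain m where m: "m \<le> t" "w m \<notin> Z" "P x (w m)" using pick a by blast
  obtain n where n: "n \<le> t" "w n \<notin> Z" "P y (w n)" using pick a by blast
  show "P x y" using ww[OF m(1) n(1) m(2) n(2)] m n tr sy by blast
qed

theorem mainTheorem3:
  fixes V :: "'a set" and E :: "('a \<times> 'a) set" and t :: nat and w :: "nat \<Rightarrow> 'a"
  assumes "finite V"
    and "E \<subseteq> V \<times> V"
    and "strongly_biconnected V E"
    and "t \<ge> 1"
    and "w ` {0..t} \<subseteq> V"
    and "inj_on w {0..t}"
    and "e_sb_related V E (w 0) (w t)"
    and "\<forall>i\<in>{1..t}. e_sb_related V E (w (i - 1)) (w i)"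
  shows "\<exists>U. two_edge_biconnected_block V E U \<and> w ` {0..t} \<subseteq> U"
proof -
  define W where "W = w ` {0..t}"
  have key: "\<exists>C. sb_component V (E - {b}) C \<and> W \<subseteq> C" if b: "b \<in> E" for b
  proof -
    define F where "F = E - {b}"
    have ex: "\<exists>C. sb_component V F C \<and> w i \<in> C \<and> w (if i = t then 0 else Suc i) \<in> C"
      if "i \<le> t" for i
    proof (cases "i = t")
      case True then show ?thesis using assms(7) b unfolding e_sb_related_def F_def by auto
    next
      case False
      then have "Suc i \<in> {1..t}" using that by auto
      then have "e_sb_related V E (w i) (w (Suc i))" using assms(8) by fastforce
      then show ?thesis using False b unfolding e_sb_related_def F_def by auto
    qed
    define D where "D i = (SOME C. sb_component V F C \<and> w i \<in> C \<and> w (if i = t then 0 else Suc i) \<in> C)" for i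
    have D: "sb_component V F (D i) \<and> w i \<in> D i \<and> w (if i = t then 0 else Suc i) \<in> D i"
      if "i \<le> t" for i
      unfolding D_def by (rule someI_ex[OF ex[OF that]])
    define U where "U = (\<Union>i\<in>{0..t}. D i)"
    have DU: "D i \<subseteq> U" if "i \<le> t" for i using that U_def by auto
    have UV: "U \<subseteq> V" unfolding U_def
    proof (rule UN_least)
      fix i assume "i \<in> {0..t}" then show "D i \<subseteq> V" using D[of i] unfolding sb_component_def by auto
    qed
    have sbD: "strongly_biconnected (D i) (F \<inter> (D i \<times> D i))" if "i \<le> t" for i
      using D[OF that] unfolding sb_component_def by auto
    have w1: "w i \<in> D i" if "i \<le> t" for i using D that by auto
    have w2: "w (Suc i) \<in> D i" if "i < t" for i using D[of i] that by auto
    have w3: "w 0 \<in> D t" using D[of t] by auto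
    have inj: "inj_on w {0..t}" by fact
    have t1: "1 \<le> t" by fact
    have w01: "w 0 \<noteq> w 1" using inj t1 by (auto dest: inj_onD)
    define F' where "F' = F \<inter> (U \<times> U)"
    have inU: "\<exists>i\<le>t. x \<in> D i" if "x \<in> U" for x using that U_def by auto
    have sc: "strongly_connected U F'"
      unfolding strongly_connected_def
    proof (intro conjI ballI)
      show "U \<noteq> {}" using w1[of 0] DU[of 0] by auto
      fix x y assume "x \<in> U" "y \<in> U"
      then obtain i k where ik: "i \<le> t" "x \<in> D i" "k \<le> t" "y \<in> D k" using inU by blast
      define R where "R = F' \<inter> (U \<times> U)"
      have comp: "(a, c) \<in> R\<^sup>* \<and> (c, a) \<in> R\<^sup>*" if j: "j \<le> t" "a \<in> D j - {}" "c \<in> D j - {}" for j a c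
      proof -
        have sub: "F \<inter> (D j \<times> D j) \<inter> (D j \<times> D j) \<subseteq> R" using DU[OF j(1)] unfolding R_def F'_def by auto
        have "(a, c) \<in> (F \<inter> (D j \<times> D j) \<inter> (D j \<times> D j))\<^sup>*" "(c, a) \<in> (F \<inter> (D j \<times> D j) \<inter> (D j \<times> D j))\<^sup>*"
          using sbD[OF j(1)] j unfolding strongly_biconnected_def strongly_connected_def by auto
        then show "(a, c) \<in> R\<^sup>* \<and> (c, a) \<in> R\<^sup>*" using rtrancl_mono[OF sub] by auto
      qed
      have "(x, y) \<in> R\<^sup>* \<and> (y, x) \<in> R\<^sup>*"
        apply (rule cyc[where Z="{}" and v=x and D=D and P="\<lambda>x y. (x, y) \<in> R\<^sup>* \<and> (y, x) \<in> R\<^sup>*"])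
        apply (erule (1) rtr)
        apply (erule rsy)
        apply (rule rrf)
        apply (rule t1)
        apply (rule inj)
        apply (erule w1)
        apply (erule w2)
        apply (rule w3)
        apply (erule (2) comp)
        apply (simp)
        apply (rule ik(1))
        apply (rule ik(3))
        using ik by auto
      then show "(x, y) \<in> (F' \<inter> (U \<times> U))\<^sup>*" unfolding R_def by simp
    qed
    have uc: "ucconnected (U - Z) F'" if Zv: "Z \<subseteq> {v}" "Z = {} \<or> v \<in> U" for Z v
      unfolding ucconnected_def
    proof (intro conjI ballI)
      have "w 0 \<in> U" "w 1 \<in> U" using w1[of 0] DU[of 0] w1[of 1] DU[of 1] t1 by auto
      then show "U - Z \<noteq> {}" using w01 Zv(1) by blast
      fix x y assume "x \<in> U - Z" "y \<in> U - Z"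
      then obtain i k where ik: "i \<le> t" "x \<in> D i - Z" "k \<le> t" "y \<in> D k - Z" using inU by blast
      define R where "R = (F' \<union> F'\<inverse>) \<inter> ((U - Z) \<times> (U - Z))"
      have comp: "(a, c) \<in> R\<^sup>* \<and> (c, a) \<in> R\<^sup>*" if j: "j \<le> t" "a \<in> D j - Z" "c \<in> D j - Z" for j a c
      proof -
        let ?G = "F \<inter> (D j \<times> D j)"
        have sub: "(?G \<union> ?G\<inverse>) \<inter> ((D j - Z) \<times> (D j - Z)) \<subseteq> R"
          using DU[OF j(1)] unfolding R_def F'_def by auto
        have ucD: "ucconnected (D j - Z) ?G"
        proof (cases "Z \<inter> D j = {}")
          case True then have "D j - Z = D j" by auto
          then show ?thesis using sbD[OF j(1)] unfolding strongly_biconnected_def ubiconnected_def by auto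
        next
          case False then have "Z = {v}" "v \<in> D j" using Zv by auto
          then show ?thesis using sbD[OF j(1)] unfolding strongly_biconnected_def ubiconnected_def by auto
        qed
        have "(a, c) \<in> ((?G \<union> ?G\<inverse>) \<inter> ((D j - Z) \<times> (D j - Z)))\<^sup>*"
             "(c, a) \<in> ((?G \<union> ?G\<inverse>) \<inter> ((D j - Z) \<times> (D j - Z)))\<^sup>*"
          using ucD j unfolding ucconnected_def by auto
        then show "(a, c) \<in> R\<^sup>* \<and> (c, a) \<in> R\<^sup>*" using rtrancl_mono[OF sub] by auto
      qed
      have "(x, y) \<in> R\<^sup>* \<and> (y, x) \<in> R\<^sup>*"
        apply (rule cyc[where Z=Z and v=v and D=D and P="\<lambda>x y. (x, y) \<in> R\<^sup>* \<and> (y, x) \<in> R\<^sup>*"])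
        apply (erule (1) rtr)
        apply (erule rsy)
        apply (rule rrf)
        apply (rule t1)
        apply (rule inj)
        apply (erule w1)
        apply (erule w2)
        apply (rule w3)
        apply (erule (2) comp)
        apply (rule Zv(1))
        apply (rule ik(1))
        apply (rule ik(3))
        using ik by auto
      then show "(x, y) \<in> ((F' \<union> F'\<inverse>) \<inter> ((U - Z) \<times> (U - Z)))\<^sup>*" unfolding R_def by simp
    qed
    have finU: "finite U" using UV assms(1) finite_subset by auto
    have "{w 0, w 1} \<subseteq> U" using w1[of 0] DU[of 0] w1[of 1] DU[of 1] t1 by auto
    then have "card {w 0, w 1} \<le> card U" using finU card_mono by blast
    then have c2: "2 \<le> card U" using w01 by simp
    have "strongly_biconnected U F'"
      unfolding strongly_biconnected_def ubiconnected_def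
      using sc uc[of "{}" undefined] uc c2 by auto
    then have "U = D 0" using D[of 0] DU[of 0] UV unfolding sb_component_def F'_def by auto
    moreover have "W \<subseteq> U" unfolding W_def using w1 DU by fastforce
    ultimately show ?thesis using D[of 0] unfolding F_def by auto
  qed
  have pw: "\<forall>x\<in>W. \<forall>y\<in>W. x \<noteq> y \<longrightarrow> e_sb_related V E x y"
    unfolding e_sb_related_def using key by blast
  define S where "S = {U'. W \<subseteq> U' \<and> U' \<subseteq> V \<and> (\<forall>x\<in>U'. \<forall>y\<in>U'. x \<noteq> y \<longrightarrow> e_sb_related V E x y)}"
  have "W \<in> S" using pw assms(5) unfolding S_def W_def by blast
  moreover have "finite S"
  proof (rule finite_subset)
    show "S \<subseteq> Pow V" unfolding S_def by blast
    show "finite (Pow V)" using assms(1) by simp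
  qed
  ultimately obtain M where M: "M \<in> S" "\<And>B. B \<in> S \<Longrightarrow> M \<le> B \<Longrightarrow> M = B"
    using finite_has_maximal[of S] by blast
  have MV: "M \<subseteq> V" and WM: "W \<subseteq> M"
    and Mpw: "\<forall>x\<in>M. \<forall>y\<in>M. x \<noteq> y \<longrightarrow> e_sb_related V E x y"
    using M(1) unfolding S_def by auto
  have "w 0 \<noteq> w 1" using assms(6) assms(4) by (auto dest: inj_onD)
  moreover have "{w 0, w 1} \<subseteq> M" using WM assms(4) unfolding W_def by auto
  moreover have "finite M" using MV assms(1) by (rule finite_subset)
  ultimately have "card {w 0, w 1} \<le> card M" using card_mono by blast
  with \<open>w 0 \<noteq> w 1\<close> have c1: "card M > 1" by simp
  have "two_edge_biconnected_block V E M"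
    unfolding two_edge_biconnected_block_def
  proof (intro conjI allI impI)
    fix U' assume a: "M \<subseteq> U' \<and> U' \<subseteq> V \<and> 1 < card U' \<and> (\<forall>x\<in>U'. \<forall>y\<in>U'. x \<noteq> y \<longrightarrow> e_sb_related V E x y)"
    then have "U' \<in> S" using WM unfolding S_def by blast
    then show "U' = M" using M(2) a by blast
  qed (use MV c1 Mpw in auto)
  then show ?thesis using WM unfolding W_def by blast
qed

end
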